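(* $\mathsf{LPO}<_W\mathsf{B_F}$ and $\mathsf{LLPO}<_W\mathsf{B_I^-}$.
   Context: A represented space is a pair $(X,\delta_X)$ with $\delta_X:\subseteq\mathbb N^{\mathbb N}\to X$ a partial surjection. For a partial multi-valued map $f:\subseteq X\rightrightarrows Y$ between represented spaces, a realizer of $f$ is a partial function $F:\subseteq\mathbb N^{\mathbb N}\to\mathbb N^{\mathbb N}$ with $\delta_Y(F(p))\in f(\delta_X(p))$ for all $p\in\mathrm{dom}(f\circ\delta_X)$. We write $f\le_W g$ (Weihrauch reducibility) if there are computable partial functions $H,K:\subseteq\mathbb N^{\mathbb N}\to\mathbb N^{\mathbb N}$ such that for every realizer $G$ of $g$ the function $p\mapsto H\langle p,G(K(p))\rangle$ is a realizer of $f$, where $\langle\cdot,\cdot\rangle$ is a standard computable pairing on $\mathbb N^{\mathbb N}$. $f<_W g$ means $f\le_W g$ and $g\not\le_W f$. $\mathsf{LPO}:\mathbb N^{\mathbb N}\to\mathbb N$ maps $p$ to $0$ if $p(n)=0$ for some $n$ and to $1$ otherwise. $\mathsf{LLPO}:\subseteq\mathbb N^{\mathbb N}\rightrightarrows\mathbb N$ is defined on sequences $p$ with $p(k)\ne0$ for at most one $k$, with $0\in\mathsf{LLPO}(p)$ iff $p(2n)=0$ for all $n$ and $1\in\mathsf{LLPO}(p)$ iff $p(2n+1)=0$ for all $n$. $\mathbb R$ carries the Cauchy representation; $\mathbb R_<$ (resp. $\mathbb R_>$) is $\mathbb R$ represented by sequences of rationals with supremum (resp. infimum) the number. $\mathsf{B_F}:\mathbb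 R_<\rightrightarrows\mathbb R$, $x\mapsto[x,\infty)$. $\mathsf{B_I^-}:\subseteq\mathbb R_<\times\mathbb R_>\rightrightarrows\mathbb R$, $(x,y)\mapsto[x,y]$, defined for $x<y$. *)

theory Defs
  imports Complex_Main "HOL-Library.Nat_Bijection"
begin

datatype rf = Zero | Succ | Proj nat | Orac | Comp rf "rf list" | Prec rf rf | Mu rf

inductive ev :: "(nat \<Rightarrow> nat) \<Rightarrow> rf \<Rightarrow> nat list \<Rightarrow> nat \<Rightarrow> bool" for p where
  ev_zero: "ev p Zero xs 0"
| ev_succ: "ev p Succ (x # xs) (Suc x)"
| ev_proj: "i < length xs \<Longrightarrow> ev p (Proj i) xs (xs ! i)"
| ev_orac: "ev p Orac (x # xs) (p x)"
| ev_comp: "list_all2 (\<lambda>g y. ev p g xs y) gs ys \<Longrightarrow> ev p f ys z \<Longrightarrow> ev p (Comp f gs) xs z"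
| ev_prec0: "ev p f xs z \<Longrightarrow> ev p (Prec f g) (0 # xs) z"
| ev_precS: "ev p (Prec f g) (n # xs) y \<Longrightarrow> ev p g (y # n # xs) z \<Longrightarrow> ev p (Prec f g) (Suc n # xs) z"
| ev_mu: "ev p f (n # xs) 0 \<Longrightarrow> (\<forall>m<n. \<exists>y. y \<noteq> 0 \<and> ev p f (m # xs) y) \<Longrightarrow> ev p (Mu f) xs n"

type_synonym baire = "nat \<Rightarrow> nat"

definition computable :: "(baire \<Rightarrow> baire option) \<Rightarrow> bool" where
  "computable F \<longleftrightarrow> (\<exists>e. \<forall>p q. F p = Some q \<longrightarrow> (\<forall>n. ev p e [n] (q n)))"

definition bpair :: "baire \<Rightarrow> baire \<Rightarrow> baire" where
  "bpair p q = (\<lambda>n. if even n then p (n div 2) else q (n div 2))"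

text \<open>A representation is a partial map from Baire space; multi-valued maps are
 'a \<Rightarrow> 'b set, with domain the set of points with nonempty value set.\<close>
type_synonym 'a rep = "baire \<Rightarrow> 'a option"

definition realizer :: "'a rep \<Rightarrow> 'b rep \<Rightarrow> ('a \<Rightarrow> 'b set) \<Rightarrow> (baire \<Rightarrow> baire option) \<Rightarrow> bool" where
  "realizer \<delta>X \<delta>Y f F \<longleftrightarrow>
     (\<forall>p x. \<delta>X p = Some x \<and> f x \<noteq> {} \<longrightarrow> (\<exists>q y. F p = Some q \<and> \<delta>Y q = Some y \<and> y \<in> f x))"

definition weihrauch_le ::
  "'a rep \<Rightarrow> 'b rep \<Rightarrow> ('a \<Rightarrow> 'b set) \<Rightarrow> 'c rep \<Rightarrow> 'd rep \<Rightarrow> ('c \<Rightarrow> 'd set) \<Rightarrow> bool" where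
  "weihrauch_le \<delta>X \<delta>Y f \<delta>U \<delta>V g \<longleftrightarrow>
     (\<exists>H K. computable H \<and> computable K \<and>
        (\<forall>G. realizer \<delta>U \<delta>V g G \<longrightarrow>
           realizer \<delta>X \<delta>Y f (\<lambda>p. Option.bind (K p) (\<lambda>k. Option.bind (G k) (\<lambda>r. H (bpair p r))))))"

definition weihrauch_less ::
  "'a rep \<Rightarrow> 'b rep \<Rightarrow> ('a \<Rightarrow> 'b set) \<Rightarrow> 'c rep \<Rightarrow> 'd rep \<Rightarrow> ('c \<Rightarrow> 'd set) \<Rightarrow> bool" where
  "weihrauch_less \<delta>X \<delta>Y f \<delta>U \<delta>V g \<longleftrightarrow>
     weihrauch_le \<delta>X \<delta>Y f \<delta>U \<delta>V g \<and> \<not> weihrauch_le \<delta>U \<delta>V g \<delta>X \<delta>Y f"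

definition rep_baire :: "baire rep" where
  "rep_baire p = Some p"

definition rep_nat :: "nat rep" where
  "rep_nat p = Some (p 0)"

definition nu_Q :: "nat \<Rightarrow> real" where
  "nu_Q n = (case prod_decode n of (a, b) \<Rightarrow> real_of_int (int_decode a) / real (Suc b))"

definition cauchy_name :: "baire \<Rightarrow> real \<Rightarrow> bool" where
  "cauchy_name p x \<longleftrightarrow> (\<forall>n. \<bar>nu_Q (p n) - x\<bar> \<le> (1/2) ^ n)"

definition rep_cauchy :: "real rep" where
  "rep_cauchy p = (if \<exists>x. cauchy_name p x then Some (THE x. cauchy_name p x) else None)"

definition lower_name :: "baire \<Rightarrow> real \<Rightarrow> bool" where
  "lower_name p x \<longleftrightarrow> (\<forall>n. nu_Q (p n) \<le> x) \<and> (\<forall>\<epsilon>>0. \<exists>n. x - \<epsilon> < nu_Q (p n))"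

definition upper_name :: "baire \<Rightarrow> real \<Rightarrow> bool" where
  "upper_name p x \<longleftrightarrow> (\<forall>n. x \<le> nu_Q (p n)) \<and> (\<forall>\<epsilon>>0. \<exists>n. nu_Q (p n) < x + \<epsilon>)"

definition rep_lower :: "real rep" where
  "rep_lower p = (if \<exists>x. lower_name p x then Some (THE x. lower_name p x) else None)"

definition rep_upper :: "real rep" where
  "rep_upper p = (if \<exists>x. upper_name p x then Some (THE x. upper_name p x) else None)"

definition rep_prod :: "'a rep \<Rightarrow> 'b rep \<Rightarrow> ('a \<times> 'b) rep" where
  "rep_prod \<delta>1 \<delta>2 r =
     (case (\<delta>1 (\<lambda>n. r (2 * n)), \<delta>2 (\<lambda>n. r (2 * n + 1))) of
        (Some a, Some b) \<Rightarrow> Some (a, b) | _ \<Rightarrow> None)"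

definition LPO :: "baire \<Rightarrow> nat set" where
  "LPO p = (if \<exists>n. p n = 0 then {0} else {1})"

definition LLPO :: "baire \<Rightarrow> nat set" where
  "LLPO p = (if \<forall>k l. p k \<noteq> 0 \<and> p l \<noteq> 0 \<longrightarrow> k = l
             then {i. (i = 0 \<and> (\<forall>n. p (2 * n) = 0)) \<or> (i = 1 \<and> (\<forall>n. p (2 * n + 1) = 0))}
             else {})"

definition B_F :: "real \<Rightarrow> real set" where
  "B_F x = {x..}"

definition B_I_minus :: "real \<times> real \<Rightarrow> real set" where
  "B_I_minus xy = (if fst xy < snd xy then {fst xy .. snd xy} else {})"

end

theory Submission
  imports Defs
begin

fun wfr :: "rf \<Rightarrow> nat \<Rightarrow> bool" where
  "wfr Zero n = True"
| "wfr Succ n = (1 \<le> n)"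
| "wfr (Proj i) n = (i < n)"
| "wfr Orac n = (1 \<le> n)"
| "wfr (Comp f gs) n = ((\<forall>g\<in>set gs. wfr g n) \<and> wfr f (length gs))"
| "wfr (Prec f g) n = (1 \<le> n \<and> wfr f (n - 1) \<and> wfr g (Suc n))"
| "wfr (Mu f) n = False"

fun den :: "baire \<Rightarrow> rf \<Rightarrow> nat list \<Rightarrow> nat" where
  "den p Zero xs = 0"
| "den p Succ xs = Suc (hd xs)"
| "den p (Proj i) xs = xs ! i"
| "den p Orac xs = p (hd xs)"
| "den p (Comp f gs) xs = den p f (map (\<lambda>g. den p g xs) gs)"
| "den p (Prec f g) xs = rec_nat (den p f (tl xs)) (\<lambda>k y. den p g (y # k # tl xs)) (hd xs)"
| "den p (Mu f) xs = 0"

lemma den_Prec0[simp]: "den p (Prec f g) (0 # xs) = den p f xs" by simp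
lemma den_PrecS[simp]: "den p (Prec f g) (Suc n # xs) = den p g (den p (Prec f g) (n # xs) # n # xs)" by simp
declare den.simps(6)[simp del]

lemma ev_den: "wfr e (length xs) \<Longrightarrow> ev p e xs (den p e xs)"
proof (induction e arbitrary: xs)
  case Zero then show ?case by (simp add: ev_zero)
next
  case Succ then show ?case by (cases xs) (auto intro: ev_succ)
next
  case (Proj i) then show ?case by (auto intro: ev_proj)
next
  case Orac then show ?case by (cases xs) (auto intro: ev_orac)
next
  case (Comp f gs)
  have "\<forall>g\<in>set gs. ev p g xs (den p g xs)" using Comp by auto
  then have "list_all2 (\<lambda>g y. ev p g xs y) gs (map (\<lambda>g. den p g xs) gs)"
    by (simp add: list_all2_conv_all_nth)
  moreover have "ev p f (map (\<lambda>g. den p g xs) gs) (den p f (map (\<lambda>g. den p g xs) gs))"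
    using Comp by simp
  ultimately show ?case by (auto intro: ev_comp)
next
  case (Prec f g)
  then obtain v ys where xs: "xs = v # ys" by (cases xs) auto
  have "ev p (Prec f g) (n # ys) (den p (Prec f g) (n # ys))" for n
  proof (induction n)
    case 0 then show ?case using Prec xs by (auto intro: ev_prec0)
  next
    case (Suc n) then show ?case using Prec xs by (auto intro: ev_precS)
  qed
  then show ?case using xs by simp
next
  case (Mu f) then show ?case by simp
qed

inductive_cases evZeroE: "ev p Zero xs y"
inductive_cases evSuccE: "ev p Succ xs y"
inductive_cases evProjE: "ev p (Proj i) xs y"
inductive_cases evOracE: "ev p Orac xs y"
inductive_cases evCompE: "ev p (Comp f gs) xs y"
inductive_cases evPrec0E: "ev p (Prec f g) (0 # xs) y"
inductive_cases evPrecSE: "ev p (Prec f g) (Suc n # xs) y"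
inductive_cases evMuE: "ev p (Mu f) xs y"

lemma ev_det_aux: "ev p e xs y \<Longrightarrow> \<forall>y'. ev p e xs y' \<longrightarrow> y = y'"
proof (induction rule: ev.induct)
  case (ev_zero xs) then show ?case by (auto elim: evZeroE)
next
  case (ev_succ x xs) then show ?case by (auto elim: evSuccE)
next
  case (ev_proj i xs) then show ?case by (auto elim: evProjE)
next
  case (ev_orac x xs) then show ?case by (auto elim: evOracE)
next
  case (ev_comp xs gs ys f z)
  show ?case
  proof (intro allI impI)
    fix y' assume "ev p (Comp f gs) xs y'"
    then obtain ys' where a: "list_all2 (\<lambda>g y. ev p g xs y) gs ys'" and b: "ev p f ys' y'"
      by (rule evCompE)
    have I: "list_all2 (\<lambda>g y. \<forall>y'. ev p g xs y' \<longrightarrow> y = y') gs ys"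
      using ev_comp(1) by (rule list_all2_mono) blast
    have L: "length ys = length ys'" using I a by (simp add: list_all2_conv_all_nth)
    have E: "ys ! i = ys' ! i" if "i < length ys" for i
    proof -
      have "i < length gs" using I that by (simp add: list_all2_conv_all_nth)
      then have "\<forall>y'. ev p (gs ! i) xs y' \<longrightarrow> ys ! i = y'" "ev p (gs ! i) xs (ys' ! i)"
        using I a by (simp_all add: list_all2_conv_all_nth)
      then show ?thesis by blast
    qed
    have "ys = ys'" by (rule nth_equalityI[OF L E])
    then have "ev p f ys y'" using b by simp
    then show "z = y'" using ev_comp(2) by blast
  qed
next
  case (ev_prec0 f xs z g)
  show ?case
  proof (intro allI impI)
    fix y' assume "ev p (Prec f g) (0 # xs) y'"
    then have "ev p f xs y'" by (rule evPrec0E)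
    then show "z = y'" using ev_prec0 by blast
  qed
next
  case (ev_precS f g n xs y z)
  show ?case
  proof (intro allI impI)
    fix y' assume "ev p (Prec f g) (Suc n # xs) y'"
    then obtain y2 where A: "ev p (Prec f g) (n # xs) y2" and B: "ev p g (y2 # n # xs) y'"
      by (rule evPrecSE)
    have "y = y2" using ev_precS(3) A by blast
    then show "z = y'" using ev_precS(4) B by blast
  qed
next
  case (ev_mu f n xs)
  show ?case
  proof (intro allI impI)
    fix y' assume "ev p (Mu f) xs y'"
    then have a: "ev p f (y' # xs) 0" and b: "\<forall>m<y'. \<exists>y. y \<noteq> 0 \<and> ev p f (m # xs) y"
      by (auto elim: evMuE)
    show "n = y'"
    proof (rule ccontr)
      assume "n \<noteq> y'"
      then consider "n < y'" | "y' < n" by linarith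
      then show False
      proof cases
        case 1 then obtain y where "y \<noteq> 0" "ev p f (n # xs) y" using b by blast
        then show False using ev_mu(2) by blast
      next
        case 2 then obtain y where "y \<noteq> 0" "ev p f (y' # xs) y" "\<forall>y''. ev p f (y' # xs) y'' \<longrightarrow> y = y''"
          using ev_mu(3) by blast
        then show False using a by blast
      qed
    qed
  qed
qed

lemma ev_det: "ev p e xs y \<Longrightarrow> ev p e xs y' \<Longrightarrow> y = y'"
  using ev_det_aux by blast

definition agree :: "nat \<Rightarrow> baire \<Rightarrow> baire \<Rightarrow> bool" where
  "agree N p p' \<longleftrightarrow> (\<forall>i<N. p' i = p i)"

definition loc :: "baire \<Rightarrow> rf \<Rightarrow> nat list \<Rightarrow> nat \<Rightarrow> bool" where
  "loc p e xs y \<longleftrightarrow> (\<exists>N. \<forall>p'. agree N p p' \<longrightarrow> ev p' e xs y)"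

lemma agree_mono: "agree N p p' \<Longrightarrow> M \<le> N \<Longrightarrow> agree M p p'"
  by (auto simp: agree_def)

lemma loc_list: "list_all2 (\<lambda>g y. loc p g xs y) gs ys \<Longrightarrow>
   \<exists>N. \<forall>p'. agree N p p' \<longrightarrow> list_all2 (\<lambda>g y. ev p' g xs y) gs ys"
proof (induction rule: list_all2_induct)
  case Nil then show ?case by simp
next
  case (Cons g gs y ys)
  then obtain N1 N2 where "\<forall>p'. agree N1 p p' \<longrightarrow> ev p' g xs y"
    "\<forall>p'. agree N2 p p' \<longrightarrow> list_all2 (\<lambda>g y. ev p' g xs y) gs ys"
    by (auto simp: loc_def)
  then show ?case by (intro exI[of _ "max N1 N2"]) (auto simp: agree_def)
qed

lemma loc_bounded: "\<forall>m<n. loc p f (m # xs) (h m) \<Longrightarrow>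
   \<exists>N. \<forall>p'. agree N p p' \<longrightarrow> (\<forall>m<n. ev p' f (m # xs) (h m))"
proof (induction n)
  case 0 then show ?case by simp
next
  case (Suc n)
  then obtain N1 where N1: "\<forall>p'. agree N1 p p' \<longrightarrow> (\<forall>m<n. ev p' f (m # xs) (h m))" by auto
  from Suc.prems obtain N2 where N2: "\<forall>p'. agree N2 p p' \<longrightarrow> ev p' f (n # xs) (h n)"
    by (auto simp: loc_def)
  show ?case
  proof (rule exI[of _ "max N1 N2"], rule allI, rule impI)
    fix p' assume "agree (max N1 N2) p p'"
    then have "agree N1 p p'" "agree N2 p p'" by (auto simp: agree_def)
    then show "\<forall>m<Suc n. ev p' f (m # xs) (h m)" using N1 N2 less_Suc_eq by auto
  qed
qed

lemma ev_loc: "ev p e xs y \<Longrightarrow> loc p e xs y"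
proof (induction rule: ev.induct)
  case (ev_zero xs) then show ?case by (auto simp: loc_def intro: ev.intros)
next
  case (ev_succ x xs) then show ?case by (auto simp: loc_def intro: ev.intros)
next
  case (ev_proj i xs) then show ?case by (auto simp: loc_def intro: ev.intros)
next
  case (ev_orac x xs)
  show ?case unfolding loc_def
  proof (rule exI[of _ "Suc x"], rule allI, rule impI)
    fix p' assume "agree (Suc x) p p'"
    then have "p' x = p x" by (auto simp: agree_def)
    then show "ev p' Orac (x # xs) (p x)" using ev.ev_orac[of p' x xs] by simp
  qed
next
  case (ev_comp xs gs ys f z)
  have "list_all2 (\<lambda>g y. loc p g xs y) gs ys"
    using ev_comp.IH(1) by (rule list_all2_mono) simp
  then obtain N1 where N1: "\<forall>p'. agree N1 p p' \<longrightarrow> list_all2 (\<lambda>g y. ev p' g xs y) gs ys"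
    using loc_list by blast
  obtain N2 where N2: "\<forall>p'. agree N2 p p' \<longrightarrow> ev p' f ys z" using ev_comp.IH(2) by (auto simp: loc_def)
  show ?case unfolding loc_def
  proof (rule exI[of _ "max N1 N2"], rule allI, rule impI)
    fix p' assume "agree (max N1 N2) p p'"
    then have "agree N1 p p'" "agree N2 p p'" by (auto simp: agree_def)
    then show "ev p' (Comp f gs) xs z" using N1 N2 by (auto intro: ev.ev_comp)
  qed
next
  case (ev_prec0 f xs z g)
  then show ?case by (auto simp: loc_def intro: ev.intros)
next
  case (ev_precS f g n xs y z)
  obtain N1 where N1: "\<forall>p'. agree N1 p p' \<longrightarrow> ev p' (Prec f g) (n # xs) y" using ev_precS.IH(1) by (auto simp: loc_def)
  obtain N2 where N2: "\<forall>p'. agree N2 p p' \<longrightarrow> ev p' g (y # n # xs) z" using ev_precS.IH(2) by (auto simp: loc_def)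
  show ?case unfolding loc_def
  proof (rule exI[of _ "max N1 N2"], rule allI, rule impI)
    fix p' assume "agree (max N1 N2) p p'"
    then have "agree N1 p p'" "agree N2 p p'" by (auto simp: agree_def)
    then show "ev p' (Prec f g) (Suc n # xs) z" using N1 N2 by (auto intro: ev.ev_precS)
  qed
next
  case (ev_mu f n xs)
  obtain N1 where N1: "\<forall>p'. agree N1 p p' \<longrightarrow> ev p' f (n # xs) 0" using ev_mu.IH(1) by (auto simp: loc_def)
  have "\<forall>m<n. \<exists>y. y \<noteq> 0 \<and> loc p f (m # xs) y" using ev_mu.IH(2) by blast
  then obtain h where h: "\<forall>m<n. h m \<noteq> 0 \<and> loc p f (m # xs) (h m)" by metis
  then obtain N2 where N2: "\<forall>p'. agree N2 p p' \<longrightarrow> (\<forall>m<n. ev p' f (m # xs) (h m))"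
    using loc_bounded[of n p f xs h] by blast
  show ?case unfolding loc_def
  proof (rule exI[of _ "max N1 N2"], rule allI, rule impI)
    fix p' assume "agree (max N1 N2) p p'"
    then have "agree N1 p p'" "agree N2 p p'" by (auto simp: agree_def)
    then show "ev p' (Mu f) xs n" using N1 N2 h by (intro ev.ev_mu) auto
  qed
qed

definition "addP = Prec (Proj 0) (Comp Succ [Proj 0])"
definition "predP = Prec Zero (Proj 1)"
definition "monusP = Prec (Proj 0) (Comp predP [Proj 0])"
definition "iszP = Prec (Comp Succ [Zero]) Zero"
definition "sgP = Comp iszP [Comp iszP [Proj 0]]"
definition "triP = Prec Zero (Comp addP [Proj 0, Comp Succ [Proj 1]])"
definition "parP = Prec Zero (Comp iszP [Proj 0])"
fun cnst :: "nat \<Rightarrow> rf" where "cnst 0 = Zero" | "cnst (Suc k) = Comp Succ [cnst k]"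
definition "ifzP n c a b = Comp (Prec a (Comp b (map Proj [2..<n+2]))) (c # map Proj [0..<n])"

lemma wf_addP[simp]: "2 \<le> n \<Longrightarrow> wfr addP n" by (simp add: addP_def)
lemma den_addP[simp]: "den p addP (a # b # xs) = a + b"
  by (induction a) (simp_all add: addP_def)
lemma wf_predP[simp]: "1 \<le> n \<Longrightarrow> wfr predP n" by (simp add: predP_def)
lemma den_predP[simp]: "den p predP (a # xs) = a - 1"
  by (cases a) (simp_all add: predP_def)
lemma wf_monusP[simp]: "2 \<le> n \<Longrightarrow> wfr monusP n" by (simp add: monusP_def)
lemma den_monusP[simp]: "den p monusP (b # a # xs) = a - b"
  by (induction b) (simp_all add: monusP_def)
lemma wf_iszP[simp]: "1 \<le> n \<Longrightarrow> wfr iszP n" by (simp add: iszP_def)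
lemma den_iszP[simp]: "den p iszP (a # xs) = (if a = 0 then 1 else 0)"
  by (cases a) (simp_all add: iszP_def)
lemma wf_sgP[simp]: "1 \<le> n \<Longrightarrow> wfr sgP n" by (simp add: sgP_def)
lemma den_sgP[simp]: "den p sgP (a # xs) = (if a = 0 then 0 else 1)"
  by (simp add: sgP_def)
lemma wf_triP[simp]: "1 \<le> n \<Longrightarrow> wfr triP n" by (simp add: triP_def)
lemma den_triP[simp]: "den p triP (a # xs) = triangle a"
  by (induction a) (simp_all add: triP_def)
lemma wf_parP[simp]: "1 \<le> n \<Longrightarrow> wfr parP n" by (simp add: parP_def)
lemma den_parP[simp]: "den p parP (a # xs) = a mod 2"
  by (induction a) (simp_all add: parP_def mod_Suc)
lemma wf_cnst[simp]: "wfr (cnst k) n" by (induction k) auto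
lemma den_cnst[simp]: "den p (cnst k) xs = k" by (induction k) auto

lemma map_den_Proj: "length xs = n \<Longrightarrow> map (\<lambda>g. den p g xs) (map Proj [0..<n]) = xs"
  by (rule nth_equalityI) auto
lemma map_den_Proj2: "length xs = n \<Longrightarrow> map (\<lambda>g. den p g (y # k # xs)) (map Proj [2..<n + 2]) = xs"
  by (rule nth_equalityI) (auto simp del: upt_Suc)

lemma den_ifzP[simp]: "length xs = n \<Longrightarrow>
  den p (ifzP n c a b) xs = (if den p c xs = 0 then den p a xs else den p b xs)"
proof -
  assume L: "length xs = n"
  have 1: "map (\<lambda>g. den p g xs) (c # map Proj [0..<n]) = den p c xs # xs"
    using map_den_Proj[OF L] by (simp only: list.map)
  have 2: "den p (Comp b (map Proj [2..<n+2])) (y # k # xs) = den p b xs" for y k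
    using map_den_Proj2[OF L] by (simp only: den.simps(5))
  have "den p (ifzP n c a b) xs = den p (Prec a (Comp b (map Proj [2..<n+2]))) (den p c xs # xs)"
    by (simp only: ifzP_def den.simps(5) 1)
  then show ?thesis by (cases "den p c xs") (simp_all only: den_Prec0 den_PrecS 2, simp_all)
qed

lemma wf_ifzP[simp]: "wfr c n \<Longrightarrow> wfr a n \<Longrightarrow> wfr b n \<Longrightarrow> wfr (ifzP n c a b) n"
  by (simp add: ifzP_def del: upt_Suc)

definition "dblP = Comp addP [Proj 0, Proj 0]"
lemma wf_dblP[simp]: "1 \<le> n \<Longrightarrow> wfr dblP n" by (simp add: dblP_def)
lemma den_dblP[simp]: "den p dblP (a # xs) = a + a" by (simp add: dblP_def)

definition "EP = Comp addP [Comp triP [dblP], dblP]"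
lemma wf_EP[simp]: "1 \<le> n \<Longrightarrow> wfr EP n" by (simp add: EP_def)
definition Ecode :: "nat \<Rightarrow> nat" where "Ecode i = triangle (i + i) + (i + i)"
lemma den_EP[simp]: "den p EP (a # xs) = Ecode a" by (simp add: EP_def Ecode_def)

definition "KLPO = Prec Zero (ifzP 2 (Proj 0)
   (ifzP 2 (Comp Orac [Comp Succ [Proj 1]]) (Comp EP [Comp Succ [Proj 1]]) Zero) (Proj 0))"

primrec SL :: "baire \<Rightarrow> nat \<Rightarrow> nat" where
  "SL p 0 = 0"
| "SL p (Suc k) = (if SL p k = 0 then (if p (Suc k) = 0 then Ecode (Suc k) else 0) else SL p k)"

lemma wf_KLPO: "wfr KLPO 1" by (simp add: KLPO_def ifzP_def)
lemma den_KLPO: "den p KLPO [n] = SL p n"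
  by (induction n) (simp_all add: KLPO_def)

definition "foundP = Prec (Comp iszP [Comp Orac [Zero]])
   (ifzP 2 (Proj 0) (Comp iszP [Comp Orac [Comp dblP [Comp Succ [Proj 1]]]]) (cnst 1))"
definition "HLPO = Comp iszP [Comp foundP [Comp Succ [Comp Orac [Comp Succ [Zero]]]]]"

primrec FL :: "baire \<Rightarrow> nat \<Rightarrow> nat" where
  "FL q 0 = (if q 0 = 0 then 1 else 0)"
| "FL q (Suc k) = (if FL q k = 0 then (if q (Suc k + Suc k) = 0 then 1 else 0) else 1)"

lemma den_foundP: "den q foundP [k] = FL q k"
  by (induction k) (simp_all add: foundP_def)
lemma wf_HLPO: "wfr HLPO 1" by (simp add: HLPO_def foundP_def ifzP_def)
lemma den_HLPO: "den q HLPO [n] = (if FL q (q 1 + 1) = 0 then 1 else 0)"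
  by (simp add: HLPO_def den_foundP[symmetric])

lemma FL_char: "FL q k = (if \<exists>i\<le>k. q (i + i) = 0 then 1 else 0)"
proof (induction k)
  case 0 then show ?case by simp
next
  case (Suc k) then show ?case by (auto simp: le_Suc_eq)
qed

definition "EvP = Prec (Comp sgP [Comp Orac [Zero]])
  (ifzP 2 (Proj 0) (ifzP 2 (Comp parP [Comp Succ [Proj 1]]) (Comp sgP [Comp Orac [Comp Succ [Proj 1]]]) Zero) (cnst 1))"
definition "OdP = Prec Zero
  (ifzP 2 (Proj 0) (ifzP 2 (Comp parP [Comp Succ [Proj 1]]) Zero (Comp sgP [Comp Orac [Comp Succ [Proj 1]]])) (cnst 1))"

lemma den_EvP: "den p EvP [k] = (if \<exists>j\<le>k. even j \<and> p j \<noteq> 0 then 1 else 0)"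
proof (induction k)
  case 0 then show ?case by (simp add: EvP_def)
next
  case (Suc k)
  have "den p EvP [Suc k] = (if den p EvP [k] = 0 then (if Suc k mod 2 = 0 then (if p (Suc k) = 0 then 0 else 1) else 0) else 1)"
    by (simp add: EvP_def)
  then show ?case using Suc by (auto simp: le_Suc_eq even_iff_mod_2_eq_zero)
qed

lemma den_OdP: "den p OdP [k] = (if \<exists>j\<le>k. odd j \<and> p j \<noteq> 0 then 1 else 0)"
proof (induction k)
  case 0 then show ?case by (simp add: OdP_def)
next
  case (Suc k)
  have "den p OdP [Suc k] = (if den p OdP [k] = 0 then (if Suc k mod 2 = 0 then 0 else (if p (Suc k) = 0 then 0 else 1)) else 1)"
    by (simp add: OdP_def)
  then show ?case using Suc by (auto simp: le_Suc_eq even_iff_mod_2_eq_zero)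
qed

definition "KLLPO = ifzP 1 (Comp parP [Proj 0]) (ifzP 1 (Comp EvP [Proj 0]) (cnst 2) (cnst 8))
   (ifzP 1 (Comp OdP [Proj 0]) (cnst 5) (cnst 4))"

lemma wf_KLLPO: "wfr KLLPO 1" by (simp add: KLLPO_def EvP_def OdP_def ifzP_def)
lemma den_KLLPO: "den p KLLPO [n] = (if even n then (if \<exists>j\<le>n. even j \<and> p j \<noteq> 0 then 8 else 2)
   else (if \<exists>j\<le>n. odd j \<and> p j \<noteq> 0 then 4 else 5))"
proof -
  have "den p KLLPO [n] = (if n mod 2 = 0 then (if den p EvP [n] = 0 then 2 else 8)
     else (if den p OdP [n] = 0 then 5 else 4))" by (simp add: KLLPO_def)
  also have "\<dots> = (if n mod 2 = 0 then (if \<exists>j\<le>n. even j \<and> p j \<noteq> 0 then 8 else 2)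
   else (if \<exists>j\<le>n. odd j \<and> p j \<noteq> 0 then 4 else 5))"
  proof -
    have X: "\<And>A B. (if n mod 2 = 0 then (if (if A then 1 else 0) = (0::nat) then 2 else 8) else (if (if B then 1 else 0) = (0::nat) then 5 else 4)) = (if n mod 2 = 0 then (if A then 8 else 2) else (if B then 4 else (5::nat)))"
      by simp
    show ?thesis unfolding den_EvP den_OdP by (rule X)
  qed
  finally show ?thesis by (simp only: even_iff_mod_2_eq_zero)
qed

definition "leP = Comp iszP [Comp monusP [Proj 1, Proj 0]]"
lemma wf_leP[simp]: "2 \<le> n \<Longrightarrow> wfr leP n" by (simp add: leP_def)
lemma den_leP[simp]: "den p leP (a # b # xs) = (if a \<le> b then 1 else 0)" by (simp add: leP_def)

definition "sP = Prec Zero (Comp addP [Proj 0, Comp leP [Comp triP [Comp Succ [Proj 0]], Proj 2]])"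
primrec sL :: "nat \<Rightarrow> nat \<Rightarrow> nat" where
  "sL c 0 = 0"
| "sL c (Suc k) = sL c k + (if triangle (Suc (sL c k)) \<le> c then 1 else 0)"
lemma den_sP: "den p sP [k, c] = sL c k"
  by (induction k) (simp_all add: sP_def)

definition "HLLPO = Comp (ifzP 1 (Comp parP [Proj 0]) (Comp sgP [Proj 0]) Zero)
   [Comp monusP [Comp triP [Comp sP [Comp Orac [cnst 5], Comp Orac [cnst 5]]], Comp Orac [cnst 5]]]"
lemma wf_HLLPO: "wfr HLLPO 1" by (simp add: HLLPO_def sP_def ifzP_def)
lemma den_HLLPO: "den q HLLPO [n] =
   (let a = q 5 - triangle (sL (q 5) (q 5)) in if a mod 2 = 0 then (if a = 0 then 0 else 1) else 0)"
  by (simp add: HLLPO_def den_sP Let_def)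

lemma nu_Q_enc: "nu_Q (prod_encode (a, b)) = real_of_int (int_decode a) / real (Suc b)"
  by (simp add: nu_Q_def)

lemma int_decode_even: "int_decode (i + i) = int i"
  by (simp add: int_decode_def sum_decode_def)

lemma nu_Q_Ecode: "nu_Q (Ecode i) = real i"
proof -
  have "Ecode i = prod_encode (i + i, 0)" by (simp add: Ecode_def prod_encode_def)
  then show ?thesis by (simp add: nu_Q_enc int_decode_even)
qed

lemma nu_Q_0: "nu_Q 0 = 0"
  using nu_Q_Ecode[of 0] by (simp add: Ecode_def)

lemma int_decode_le: "int_decode a \<le> int a"
  by (auto simp: int_decode_def sum_decode_def)

lemma nu_Q_le: "nu_Q c \<le> real c"
proof -
  obtain a b where ab: "prod_decode c = (a, b)" by (cases "prod_decode c")
  then have c: "c = prod_encode (a, b)" by (metis prod_decode_inverse)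
  have "nu_Q c = real_of_int (int_decode a) / real (Suc b)" using c by (simp add: nu_Q_enc)
  also have "\<dots> \<le> real a"
  proof (cases "int_decode a \<ge> 0")
    case True
    have "real_of_int (int_decode a) / real (Suc b) \<le> real_of_int (int_decode a)"
      using True by (simp add: divide_le_eq mult_le_cancel_left1)
    also have "\<dots> \<le> real a" using int_decode_le[of a] by linarith
    finally show ?thesis .
  next
    case False
    then have "real_of_int (int_decode a) / real (Suc b) \<le> 0" by (simp add: divide_nonpos_pos)
    then show ?thesis by simp
  qed
  also have "\<dots> \<le> real c" using c le_prod_encode_1 by simp
  finally show ?thesis .
qed

lemma nu_Q_surj: "r \<in> \<rat> \<Longrightarrow> \<exists>c. nu_Q c = r"
proof -
  assume "r \<in> \<rat>"
  then obtain a :: int and b :: nat where r: "r = of_int a / of_nat b" and b: "b \<noteq> 0"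
    by (rule Rats_cases') (metis of_int_of_nat_eq zero_less_imp_eq_int less_irrefl)
  have "nu_Q (prod_encode (int_encode a, b - 1)) = r"
    using b by (simp add: nu_Q_enc r)
  then show ?thesis by blast
qed

lemma nu_Q_consts: "nu_Q 2 = -1" "nu_Q 8 = 1/2" "nu_Q 5 = 1" "nu_Q 4 = -1/2"
proof -
  have d: "int_decode (Suc 0) = -1" "int_decode 2 = 1"
    by (simp_all add: int_decode_def sum_decode_def)
  have "prod_encode (1, 0) = 2" by (simp add: prod_encode_def triangle_def)
  then show "nu_Q 2 = -1" using nu_Q_enc[of "fst (1, 0)" "snd (1, 0)"] by (simp add: d)
  have "prod_encode (2, 1) = 8" by (simp add: prod_encode_def triangle_def)
  then show "nu_Q 8 = 1/2" using nu_Q_enc[of "fst (2, 1)" "snd (2, 1)"] by (simp add: d)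
  have "prod_encode (2, 0) = 5" by (simp add: prod_encode_def triangle_def)
  then show "nu_Q 5 = 1" using nu_Q_enc[of "fst (2, 0)" "snd (2, 0)"] by (simp add: d)
  have "prod_encode (1, 1) = 4" by (simp add: prod_encode_def triangle_def)
  then show "nu_Q 4 = -1/2" using nu_Q_enc[of "fst (1, 1)" "snd (1, 1)"] by (simp add: d)
qed

lemma lower_unique: "lower_name p x \<Longrightarrow> lower_name p y \<Longrightarrow> x = y"
proof (rule ccontr)
  assume a: "lower_name p x" "lower_name p y" "x \<noteq> y"
  show False
  proof (cases "x < y")
    case True
    then have "y - x > 0" by simp
    then obtain n where "y - (y - x) < nu_Q (p n)" using a(2) unfolding lower_name_def by blast
    moreover have "nu_Q (p n) \<le> x" using a(1) unfolding lower_name_def by blast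
    ultimately show False by simp
  next
    case False
    then have "y < x" using a(3) by simp
    then have "x - y > 0" by simp
    then obtain n where "x - (x - y) < nu_Q (p n)" using a(1) unfolding lower_name_def by blast
    moreover have "nu_Q (p n) \<le> y" using a(2) unfolding lower_name_def by blast
    ultimately show False by simp
  qed
qed

lemma upper_unique: "upper_name p x \<Longrightarrow> upper_name p y \<Longrightarrow> x = y"
proof (rule ccontr)
  assume a: "upper_name p x" "upper_name p y" "x \<noteq> y"
  show False
  proof (cases "x < y")
    case True
    then have "y - x > 0" by simp
    then obtain n where "nu_Q (p n) < x + (y - x)" using a(1) unfolding upper_name_def by blast
    moreover have "y \<le> nu_Q (p n)" using a(2) unfolding upper_name_def by blast
    ultimately show False by simp
  next
    case False
    then have "y < x" using a(3) by simp
    then have "x - y > 0" by simp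
    then obtain n where "nu_Q (p n) < y + (x - y)" using a(2) unfolding upper_name_def by blast
    moreover have "x \<le> nu_Q (p n)" using a(1) unfolding upper_name_def by blast
    ultimately show False by simp
  qed
qed

lemma cauchy_unique: "cauchy_name p x \<Longrightarrow> cauchy_name p y \<Longrightarrow> x = y"
proof (rule ccontr)
  assume a: "cauchy_name p x" "cauchy_name p y" "x \<noteq> y"
  then have d: "\<bar>x - y\<bar> > 0" by simp
  obtain n where n: "(1/2::real) ^ n < \<bar>x - y\<bar> / 2" using real_arch_pow_inv[of "\<bar>x - y\<bar> / 2" "1/2"] d by auto
  have "\<bar>nu_Q (p n) - x\<bar> \<le> (1/2) ^ n" "\<bar>nu_Q (p n) - y\<bar> \<le> (1/2) ^ n"
    using a unfolding cauchy_name_def by auto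
  then have "nu_Q (p n) - (1/2)^n \<le> x" "x \<le> nu_Q (p n) + (1/2)^n"
    "nu_Q (p n) - (1/2)^n \<le> y" "y \<le> nu_Q (p n) + (1/2)^n"
    by (simp_all add: abs_diff_le_iff)
  moreover have "x - y \<le> 2 * (1/2)^n \<Longrightarrow> y - x \<le> 2 * (1/2)^n \<Longrightarrow> False" using n by (cases "x \<le> y") (auto simp: abs_if split: if_splits)
  ultimately show False by linarith
qed

lemma rep_lower_iff: "rep_lower p = Some x \<longleftrightarrow> lower_name p x"
proof
  assume L: "lower_name p x"
  then have "(THE x. lower_name p x) = x" by (rule the_equality) (metis lower_unique L)
  then show "rep_lower p = Some x" using L by (auto simp: rep_lower_def)
next
  assume R: "rep_lower p = Some x"
  then obtain y where Y: "lower_name p y" and X: "x = (THE x. lower_name p x)" by (auto simp: rep_lower_def split: if_splits)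
  from Y have "(THE x. lower_name p x) = y" by (rule the_equality) (metis lower_unique Y)
  then show "lower_name p x" using X Y by simp
qed

lemma rep_upper_iff: "rep_upper p = Some x \<longleftrightarrow> upper_name p x"
proof
  assume L: "upper_name p x"
  then have "(THE x. upper_name p x) = x" by (rule the_equality) (metis upper_unique L)
  then show "rep_upper p = Some x" using L by (auto simp: rep_upper_def)
next
  assume R: "rep_upper p = Some x"
  then obtain y where Y: "upper_name p y" and X: "x = (THE x. upper_name p x)" by (auto simp: rep_upper_def split: if_splits)
  from Y have "(THE x. upper_name p x) = y" by (rule the_equality) (metis upper_unique Y)
  then show "upper_name p x" using X Y by simp
qed

lemma rep_cauchy_iff: "rep_cauchy p = Some x \<longleftrightarrow> cauchy_name p x"
proof
  assume L: "cauchy_name p x"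
  then have "(THE x. cauchy_name p x) = x" by (rule the_equality) (metis cauchy_unique L)
  then show "rep_cauchy p = Some x" using L by (auto simp: rep_cauchy_def)
next
  assume R: "rep_cauchy p = Some x"
  then obtain y where Y: "cauchy_name p y" and X: "x = (THE x. cauchy_name p x)" by (auto simp: rep_cauchy_def split: if_splits)
  from Y have "(THE x. cauchy_name p x) = y" by (rule the_equality) (metis cauchy_unique Y)
  then show "cauchy_name p x" using X Y by simp
qed

lemma rep_prod_iff: "rep_prod rep_lower rep_upper r = Some (x, y) \<longleftrightarrow>
   lower_name (\<lambda>n. r (2 * n)) x \<and> upper_name (\<lambda>n. r (2 * n + 1)) y"
  unfolding rep_prod_def by (auto simp: rep_lower_iff[symmetric] rep_upper_iff[symmetric] split: option.splits)

lemma computable_den: "wfr e 1 \<Longrightarrow> computable (\<lambda>p. Some (\<lambda>n. den p e [n]))"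
  unfolding computable_def using ev_den[of e "[_]"] by auto

lemma Ecode_pos: "1 \<le> i \<Longrightarrow> Ecode i \<noteq> 0" by (simp add: Ecode_def)

lemma SL_char: "SL p n = (if \<exists>j. 1 \<le> j \<and> j \<le> n \<and> p j = 0 then Ecode (LEAST j. 1 \<le> j \<and> p j = 0) else 0)"
proof (induction n)
  case 0 then show ?case by auto
next
  case (Suc k)
  show ?case
  proof (cases "\<exists>j. 1 \<le> j \<and> j \<le> k \<and> p j = 0")
    case True
    then have "(LEAST j. 1 \<le> j \<and> p j = 0) \<ge> 1" by (metis (mono_tags, lifting) LeastI)
    then have "SL p k \<noteq> 0" using Suc True Ecode_pos by simp
    then show ?thesis using Suc True by (auto simp: le_Suc_eq)
  next
    case False
    have k0: "SL p k = 0" by (simp only: Suc.IH if_not_P[OF False])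
    show ?thesis
    proof (cases "p (Suc k) = 0")
      case True
      have "(LEAST j. 1 \<le> j \<and> p j = 0) = Suc k"
        by (rule Least_equality) (use True False in \<open>auto simp: not_less_eq_eq[symmetric]\<close>)
      then show ?thesis using True k0 by auto
    next
      case F2: False
      have nex: "\<not> (\<exists>j. 1 \<le> j \<and> j \<le> Suc k \<and> p j = 0)" using False F2 le_Suc_eq by auto
      have "SL p (Suc k) = 0" using k0 F2 by simp
      then show ?thesis by (simp only: if_not_P[OF nex])
    qed
  qed
qed

definition xL :: "baire \<Rightarrow> real" where
  "xL p = (if \<exists>j. 1 \<le> j \<and> p j = 0 then real (LEAST j. 1 \<le> j \<and> p j = 0) else 0)"

lemma lower_SL: "lower_name (SL p) (xL p)"
  unfolding lower_name_def
proof (intro conjI allI impI)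
  fix n show "nu_Q (SL p n) \<le> xL p"
    by (auto simp: SL_char xL_def nu_Q_Ecode nu_Q_0)
next
  fix e :: real assume e: "0 < e"
  show "\<exists>n. xL p - e < nu_Q (SL p n)"
  proof (cases "\<exists>j. 1 \<le> j \<and> p j = 0")
    case True
    define L where "L = (LEAST j. 1 \<le> j \<and> p j = 0)"
    have "1 \<le> L \<and> p L = 0" unfolding L_def using True by (metis (mono_tags, lifting) LeastI)
    then have "SL p L = Ecode L" by (auto simp: SL_char L_def)
    then show ?thesis using e True by (intro exI[of _ L]) (simp add: nu_Q_Ecode xL_def L_def)
  next
    case False
    have "xL p = 0" by (simp only: xL_def if_not_P[OF False])
    then show ?thesis using e by (intro exI[of _ 0]) (simp add: nu_Q_0)
  qed
qed

lemma bpair_odd: "bpair p r (2 * n + 1) = r n" by (simp add: bpair_def)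
lemma bpair_even: "bpair p r (n + n) = p n" by (simp add: bpair_def)

lemma cauchy_0: "cauchy_name r t \<Longrightarrow> t \<le> nu_Q (r 0) + 1"
  unfolding cauchy_name_def by (drule spec[of _ 0]) simp

lemma LPO_le_BF: "weihrauch_le rep_baire rep_nat LPO rep_lower rep_cauchy B_F"
  unfolding weihrauch_le_def
proof (intro exI conjI allI impI)
  show "computable (\<lambda>p. Some (\<lambda>n. den p HLPO [n]))" by (rule computable_den[OF wf_HLPO])
  show "computable (\<lambda>p. Some (\<lambda>n. den p KLPO [n]))" by (rule computable_den[OF wf_KLPO])
  fix G assume G: "realizer rep_lower rep_cauchy B_F G"
  show "realizer rep_baire rep_nat LPO (\<lambda>p. Option.bind (Some (\<lambda>n. den p KLPO [n]))
          (\<lambda>k. Option.bind (G k) (\<lambda>r. Some (\<lambda>n. den (bpair p r) HLPO [n]))))"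
    unfolding realizer_def
  proof (intro allI impI, elim conjE)
    fix p x assume px: "rep_baire p = Some x"
    have K: "(\<lambda>n. den p KLPO [n]) = SL p" by (simp add: den_KLPO)
    have "rep_lower (SL p) = Some (xL p)" by (simp add: rep_lower_iff lower_SL)
    then obtain r t where r: "G (SL p) = Some r" "rep_cauchy r = Some t" "t \<in> B_F (xL p)"
      using G unfolding realizer_def B_F_def by fastforce
    have ct: "cauchy_name r t" using r(2) by (simp add: rep_cauchy_iff)
    have q1: "bpair p r (Suc 0) = r 0" using bpair_odd[of p r 0] by simp
    have out: "den (bpair p r) HLPO [0] = (if \<exists>i\<le>r 0 + 1. p i = 0 then 0 else 1)"
      by (simp add: den_HLPO FL_char q1 bpair_even)
    have "den (bpair p r) HLPO [0] \<in> LPO p"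
    proof (cases "\<exists>n. p n = 0")
      case True
      have "\<exists>i\<le>r 0 + 1. p i = 0"
      proof (cases "p 0 = 0")
        case True then show ?thesis by blast
      next
        case False
        then have ex: "\<exists>j. 1 \<le> j \<and> p j = 0" using \<open>\<exists>n. p n = 0\<close> by (metis less_one not_le)
        define L where "L = (LEAST j. 1 \<le> j \<and> p j = 0)"
        have L: "1 \<le> L \<and> p L = 0" unfolding L_def using ex by (metis (mono_tags, lifting) LeastI)
        have "real L = xL p" using ex by (simp add: xL_def L_def)
        also have "\<dots> \<le> t" using r(3) by (simp add: B_F_def)
        also have "\<dots> \<le> nu_Q (r 0) + 1" using cauchy_0[OF ct] .
        also have "\<dots> \<le> real (r 0) + 1" using nu_Q_le[of "r 0"] by simp
        finally have "L \<le> r 0 + 1" by linarith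
        then show ?thesis using L by blast
      qed
      then show ?thesis using True out by (simp add: LPO_def)
    next
      case False then show ?thesis using out by (simp add: LPO_def)
    qed
    then show "\<exists>q y. Option.bind (Some (\<lambda>n. den p KLPO [n]))
          (\<lambda>k. Option.bind (G k) (\<lambda>r. Some (\<lambda>n. den (bpair p r) HLPO [n]))) = Some q \<and>
          rep_nat q = Some y \<and> y \<in> LPO x"
      using px r(1) K by (simp add: rep_nat_def rep_baire_def)
  qed
qed

lemma tri_mono: "a \<le> b \<Longrightarrow> triangle a \<le> triangle b"
  by (induction b) (auto simp: le_Suc_eq)
lemma le_tri: "n \<le> triangle n" by (induction n) auto

lemma sL_min: "triangle s \<le> c \<Longrightarrow> c < triangle (Suc s) \<Longrightarrow> sL c k = min k s"
proof (induction k)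
  case 0 then show ?case by simp
next
  case (Suc k)
  have IH: "sL c k = min k s" using Suc.IH Suc.prems by blast
  show ?case
  proof (cases "k < s")
    case True
    then have "triangle (Suc k) \<le> c" using tri_mono[of "Suc k" s] Suc.prems(1) by simp
    then have "sL c (Suc k) = Suc k" using True IH by simp
    then show ?thesis using True by simp
  next
    case False
    then have m: "min k s = s" by simp
    have "\<not> triangle (Suc s) \<le> c" using Suc.prems(2) by simp
    then have "sL c (Suc k) = s" using IH m by simp
    then show ?thesis using False by simp
  qed
qed

lemma decode_fst: "fst (prod_decode c) = c - triangle (sL c c)"
proof -
  obtain a b where ab: "prod_decode c = (a, b)" by (cases "prod_decode c")
  have "prod_encode (a, b) = c" using prod_decode_inverse[of c] ab by simp
  then have c: "c = triangle (a + b) + a" by (simp add: prod_encode_def)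
  have t1: "triangle (a + b) \<le> c" using c by simp
  have t2: "c < triangle (Suc (a + b))" using c by simp
  have "sL c c = min c (a + b)" by (rule sL_min[OF t1 t2])
  moreover have "a + b \<le> c" using c le_tri[of "a + b"] by simp
  ultimately have "sL c c = a + b" by simp
  then show ?thesis using ab c by simp
qed

lemma nu_Q_pos: "nu_Q c > 0 \<longleftrightarrow> (let a = fst (prod_decode c) in a mod 2 = 0 \<and> a \<noteq> 0)"
proof -
  obtain a b where ab: "prod_decode c = (a, b)" by (cases "prod_decode c")
  have "nu_Q c = real_of_int (int_decode a) / real (Suc b)" using ab by (simp add: nu_Q_def)
  then have "nu_Q c > 0 \<longleftrightarrow> int_decode a > 0" by (simp add: zero_less_divide_iff)
  also have "\<dots> \<longleftrightarrow> a mod 2 = 0 \<and> a \<noteq> 0"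
    by (auto simp: int_decode_def sum_decode_def even_iff_mod_2_eq_zero[symmetric] elim: evenE)
  finally show ?thesis using ab by simp
qed

lemma den_HLLPO': "den q HLLPO [n] = (if nu_Q (q 5) > 0 then 1 else 0)"
  by (simp add: den_HLLPO nu_Q_pos decode_fst Let_def)

definition xLL :: "baire \<Rightarrow> real" where
  "xLL p = (if \<exists>j. even j \<and> p j \<noteq> 0 then 1/2 else -1)"
definition yLL :: "baire \<Rightarrow> real" where
  "yLL p = (if \<exists>j. odd j \<and> p j \<noteq> 0 then -1/2 else 1)"

lemma lower_KLLPO: "lower_name (\<lambda>n. den p KLLPO [2 * n]) (xLL p)"
  unfolding lower_name_def
proof (intro conjI allI impI)
  fix n show "nu_Q (den p KLLPO [2 * n]) \<le> xLL p"
    by (auto simp: den_KLLPO xLL_def nu_Q_consts)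
next
  fix e :: real assume e: "0 < e"
  show "\<exists>n. xLL p - e < nu_Q (den p KLLPO [2 * n])"
  proof (cases "\<exists>j. even j \<and> p j \<noteq> 0")
    case True
    then obtain j where j: "even j" "p j \<noteq> 0" by blast
    have "den p KLLPO [2 * j] = 8" using j by (auto simp: den_KLLPO intro!: exI[of _ j])
    then show ?thesis using e True by (intro exI[of _ j]) (simp add: xLL_def nu_Q_consts)
  next
    case False
    have "xLL p = -1" by (simp only: xLL_def if_not_P[OF False])
    moreover have "nu_Q (den p KLLPO [2 * 0]) \<ge> -1" by (auto simp: den_KLLPO nu_Q_consts)
    ultimately show ?thesis using e by (intro exI[of _ 0]) simp
  qed
qed

lemma upper_KLLPO: "upper_name (\<lambda>n. den p KLLPO [2 * n + 1]) (yLL p)"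
  unfolding upper_name_def
proof (intro conjI allI impI)
  fix n show "yLL p \<le> nu_Q (den p KLLPO [2 * n + 1])"
    by (auto simp: den_KLLPO yLL_def nu_Q_consts)
next
  fix e :: real assume e: "0 < e"
  show "\<exists>n. nu_Q (den p KLLPO [2 * n + 1]) < yLL p + e"
  proof (cases "\<exists>j. odd j \<and> p j \<noteq> 0")
    case True
    then obtain j where j: "odd j" "p j \<noteq> 0" by blast
    have "den p KLLPO [2 * j + 1] = 4" using j by (auto simp: den_KLLPO intro!: exI[of _ j])
    then show ?thesis using e True by (intro exI[of _ j]) (simp add: yLL_def nu_Q_consts)
  next
    case False
    have "yLL p = 1" by (simp only: yLL_def if_not_P[OF False])
    moreover have "nu_Q (den p KLLPO [2 * 0 + 1]) \<le> 1" by (auto simp: den_KLLPO nu_Q_consts)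
    ultimately show ?thesis using e by (intro exI[of _ 0]) simp
  qed
qed

lemma LLPO_le_BI: "weihrauch_le rep_baire rep_nat LLPO (rep_prod rep_lower rep_upper) rep_cauchy B_I_minus"
  unfolding weihrauch_le_def
proof (intro exI conjI allI impI)
  show "computable (\<lambda>p. Some (\<lambda>n. den p HLLPO [n]))" by (rule computable_den[OF wf_HLLPO])
  show "computable (\<lambda>p. Some (\<lambda>n. den p KLLPO [n]))" by (rule computable_den[OF wf_KLLPO])
  fix G assume G: "realizer (rep_prod rep_lower rep_upper) rep_cauchy B_I_minus G"
  show "realizer rep_baire rep_nat LLPO (\<lambda>p. Option.bind (Some (\<lambda>n. den p KLLPO [n]))
          (\<lambda>k. Option.bind (G k) (\<lambda>r. Some (\<lambda>n. den (bpair p r) HLLPO [n]))))"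
    unfolding realizer_def
  proof (intro allI impI, elim conjE)
    fix p x assume px: "rep_baire p = Some x" and ne: "LLPO x \<noteq> {}"
    then have xp: "x = p" by (simp add: rep_baire_def)
    have one: "\<forall>k l. p k \<noteq> 0 \<and> p l \<noteq> 0 \<longrightarrow> k = l" using ne xp by (auto simp: LLPO_def split: if_splits)
    define k where "k = (\<lambda>n. den p KLLPO [n])"
    have rp: "rep_prod rep_lower rep_upper k = Some (xLL p, yLL p)"
      unfolding rep_prod_iff k_def using lower_KLLPO upper_KLLPO by simp
    have xy: "xLL p < yLL p"
    proof -
      have "\<not> ((\<exists>j. even j \<and> p j \<noteq> 0) \<and> (\<exists>j. odd j \<and> p j \<noteq> 0))" using one by blast
      then show ?thesis by (auto simp: xLL_def yLL_def)
    qed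
    have ne2: "B_I_minus (xLL p, yLL p) \<noteq> {}" using xy by (simp add: B_I_minus_def)
    obtain r t where r: "G k = Some r" "rep_cauchy r = Some t" "t \<in> B_I_minus (xLL p, yLL p)"
      using G[unfolded realizer_def, rule_format, OF conjI[OF rp ne2]] by blast
    have ct: "cauchy_name r t" using r(2) by (simp add: rep_cauchy_iff)
    have t: "xLL p \<le> t" "t \<le> yLL p" using r(3) xy by (auto simp: B_I_minus_def)
    have c2: "\<bar>nu_Q (r 2) - t\<bar> \<le> 1/4" using ct unfolding cauchy_name_def by (drule_tac x=2 in spec) (simp add: power2_eq_square)
    have q5: "bpair p r 5 = r 2" using bpair_odd[of p r 2] by simp
    have out: "den (bpair p r) HLLPO [0] = (if nu_Q (r 2) > 0 then 1 else 0)"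
      by (simp add: den_HLLPO' q5)
    have LL: "LLPO p = {i. (i = 0 \<and> (\<forall>n. p (2 * n) = 0)) \<or> (i = 1 \<and> (\<forall>n. p (2 * n + 1) = 0))}"
      by (simp only: LLPO_def if_P[OF one])
    have "den (bpair p r) HLLPO [0] \<in> LLPO p"
    proof (cases "\<exists>j. even j \<and> p j \<noteq> 0")
      case True
      then obtain j where j: "even j" "p j \<noteq> 0" by blast
      have odd0: "\<forall>n. p (2 * n + 1) = 0"
      proof
        fix n show "p (2 * n + 1) = 0"
        proof (rule ccontr)
          assume "p (2 * n + 1) \<noteq> 0"
          then have "2 * n + 1 = j" using one j(2) by blast
          then have "odd j" by auto
          then show False using j(1) by simp
        qed
      qed
      have "t \<ge> 1/2" using t True by (simp add: xLL_def)
      then have "nu_Q (r 2) > 0" using c2 abs_le_iff[of "nu_Q (r 2) - t" "1/4"] by linarith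
      then show ?thesis using out odd0 by (simp add: LL)
    next
      case False
      then have ev0: "\<forall>n. p (2 * n) = 0" by auto
      show ?thesis
      proof (cases "\<exists>j. odd j \<and> p j \<noteq> 0")
        case True
        have "t \<le> -1/2" using t True by (simp add: yLL_def)
        then have "\<not> nu_Q (r 2) > 0" using c2 abs_le_iff[of "nu_Q (r 2) - t" "1/4"] by linarith
        then show ?thesis using out ev0 by (simp add: LL)
      next
        case F2: False
        have odd0: "\<forall>n. p (2 * n + 1) = 0"
        proof
          fix n :: nat have "odd (2 * n + 1)" by simp
          then show "p (2 * n + 1) = 0" using F2 by blast
        qed
        show ?thesis using out ev0 odd0 by (simp add: LL)
      qed
    qed
    then show "\<exists>q y. Option.bind (Some (\<lambda>n. den p KLLPO [n]))
          (\<lambda>k. Option.bind (G k) (\<lambda>r. Some (\<lambda>n. den (bpair p r) HLLPO [n]))) = Some q \<and>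
          rep_nat q = Some y \<and> y \<in> LLPO x"
      using xp r(1) k_def by (simp add: rep_nat_def)
  qed
qed

lemma computable_local: "computable F \<Longrightarrow> F p = Some q \<Longrightarrow>
   \<exists>N. \<forall>p' q'. agree N p p' \<longrightarrow> F p' = Some q' \<longrightarrow> q' m = q m"
proof -
  assume "computable F" "F p = Some q"
  then obtain e where e: "\<forall>p q. F p = Some q \<longrightarrow> (\<forall>n. ev p e [n] (q n))" by (auto simp: computable_def)
  then have "ev p e [m] (q m)" using \<open>F p = Some q\<close> by blast
  then obtain N where N: "\<forall>p'. agree N p p' \<longrightarrow> ev p' e [m] (q m)" using ev_loc[of p e "[m]" "q m"] unfolding loc_def by blast
  show ?thesis
  proof (rule exI[of _ N], intro allI impI)
    fix p' q' assume "agree N p p'" "F p' = Some q'"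
    then have "ev p' e [m] (q m)" "ev p' e [m] (q' m)" using N e by auto
    then show "q' m = q m" using ev_det by metis
  qed
qed

lemma agree_bpair: "agree N p p' \<Longrightarrow> agree N (bpair p c) (bpair p' c)"
  unfolding agree_def bpair_def by (auto dest: spec[of _ "_ div 2"])

lemma ext_lower: "lower_name p x \<Longrightarrow> \<exists>p' z. lower_name p' z \<and> agree N p p' \<and> w \<le> z \<and> x \<le> z"
proof -
  assume L: "lower_name p x"
  define z :: nat where "z = nat \<lceil>\<bar>x\<bar> + \<bar>w\<bar>\<rceil>"
  have z: "w \<le> real z" "x \<le> real z" unfolding z_def by linarith+
  define p' where "p' = (\<lambda>i. if i < N then p i else Ecode z)"
  have "lower_name p' (real z)"
    unfolding lower_name_def
  proof (intro conjI allI impI)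
    fix n show "nu_Q (p' n) \<le> real z"
      using L z by (auto simp: p'_def lower_name_def nu_Q_Ecode intro: order_trans)
  next
    fix e :: real assume "0 < e"
    then show "\<exists>n. real z - e < nu_Q (p' n)" by (intro exI[of _ N]) (simp add: p'_def nu_Q_Ecode)
  qed
  moreover have "agree N p p'" by (simp add: agree_def p'_def)
  ultimately show ?thesis using z by blast
qed

lemma ext_prod: "lower_name (\<lambda>n. p (2 * n)) x \<Longrightarrow> upper_name (\<lambda>n. p (2 * n + 1)) y \<Longrightarrow>
  r \<in> \<rat> \<Longrightarrow> s \<in> \<rat> \<Longrightarrow> x \<le> r \<Longrightarrow> s \<le> y \<Longrightarrow>
  \<exists>p'. lower_name (\<lambda>n. p' (2 * n)) r \<and> upper_name (\<lambda>n. p' (2 * n + 1)) s \<and> agree N p p'"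
proof -
  assume L: "lower_name (\<lambda>n. p (2 * n)) x" and U: "upper_name (\<lambda>n. p (2 * n + 1)) y"
    and rs: "r \<in> \<rat>" "s \<in> \<rat>" "x \<le> r" "s \<le> y"
  obtain cr cs where c: "nu_Q cr = r" "nu_Q cs = s" using nu_Q_surj rs by metis
  define p' where "p' = (\<lambda>i. if i < N then p i else if even i then cr else cs)"
  have "lower_name (\<lambda>n. p' (2 * n)) r"
    unfolding lower_name_def
  proof (intro conjI allI impI)
    fix n show "nu_Q (p' (2 * n)) \<le> r"
      using L rs c by (auto simp: p'_def lower_name_def intro: order_trans)
  next
    fix e :: real assume "0 < e"
    then show "\<exists>n. r - e < nu_Q (p' (2 * n))" using c by (intro exI[of _ N]) (simp add: p'_def)
  qed
  moreover have "upper_name (\<lambda>n. p' (2 * n + 1)) s"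
    unfolding upper_name_def
  proof (intro conjI allI impI)
    fix n show "s \<le> nu_Q (p' (2 * n + 1))"
      using U rs c by (auto simp: p'_def upper_name_def intro: order_trans)
  next
    fix e :: real assume "0 < e"
    then show "\<exists>n. nu_Q (p' (2 * n + 1)) < s + e" using c by (intro exI[of _ N]) (simp add: p'_def)
  qed
  moreover have "agree N p p'" by (simp add: agree_def p'_def)
  ultimately show ?thesis by blast
qed

lemma cauchy_m: "cauchy_name q t \<Longrightarrow> \<bar>nu_Q (q m) - t\<bar> \<le> (1/2) ^ m"
  unfolding cauchy_name_def by blast

lemma four_rats: "(x::real) < y \<Longrightarrow> \<exists>r1 r2 r3 r4. r1 \<in> \<rat> \<and> r2 \<in> \<rat> \<and> r3 \<in> \<rat> \<and> r4 \<in> \<rat> \<and>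
   x < r1 \<and> r1 < r2 \<and> r2 < r3 \<and> r3 < r4 \<and> r4 < y"
  by (metis Rats_dense_in_real)


lemma BF_not_le_LPO: "\<not> weihrauch_le rep_lower rep_cauchy B_F rep_baire rep_nat LPO"
proof
  assume "weihrauch_le rep_lower rep_cauchy B_F rep_baire rep_nat LPO"
  then obtain H K where HK: "computable H" "computable K" and
    R: "\<And>G. realizer rep_baire rep_nat LPO G \<Longrightarrow>
           realizer rep_lower rep_cauchy B_F (\<lambda>p. Option.bind (K p) (\<lambda>k. Option.bind (G k) (\<lambda>r. H (bpair p r))))"
    unfolding weihrauch_le_def by blast
  define lpo :: "baire \<Rightarrow> nat" where "lpo k = (if \<exists>n. k n = 0 then 0 else 1)" for k
  define G0 :: "baire \<Rightarrow> baire option" where "G0 k = Some (\<lambda>_. lpo k)" for k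
  have "realizer rep_baire rep_nat LPO G0"
    unfolding realizer_def by (auto simp: G0_def rep_nat_def rep_baire_def LPO_def lpo_def)
  then have RR: "realizer rep_lower rep_cauchy B_F (\<lambda>p. Option.bind (K p) (\<lambda>k. Option.bind (G0 k) (\<lambda>r. H (bpair p r))))"
    by (rule R)
  have F1: "\<exists>k q y. K p = Some k \<and> H (bpair p (\<lambda>_. lpo k)) = Some q \<and> cauchy_name q y \<and> x \<le> y"
    if "lower_name p x" for p x
  proof -
    have "rep_lower p = Some x" using that by (simp add: rep_lower_iff)
    moreover have "B_F x \<noteq> {}" by (simp add: B_F_def)
    ultimately obtain q y where "Option.bind (K p) (\<lambda>k. Option.bind (G0 k) (\<lambda>r. H (bpair p r))) = Some q"
      "rep_cauchy q = Some y" "y \<in> B_F x"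
      using RR unfolding realizer_def by blast
    then show ?thesis
      by (cases "K p") (auto simp: G0_def rep_cauchy_iff B_F_def)
  qed
  have core: "False" if p: "lower_name p x" and Kp: "K p = Some k" and Hq: "H (bpair p (\<lambda>_. lpo k)) = Some q"
    and stab: "\<And>p' z k'. lower_name p' z \<Longrightarrow> agree N1 p p' \<Longrightarrow> K p' = Some k' \<Longrightarrow> lpo k' = lpo k"
    for p x k q N1
  proof -
    obtain N2 where N2: "\<forall>p'' q'. agree N2 (bpair p (\<lambda>_. lpo k)) p'' \<longrightarrow> H p'' = Some q' \<longrightarrow> q' 0 = q 0"
      using computable_local[of H, OF HK(1) Hq] by blast
    obtain p' z where p': "lower_name p' z" "agree (max N1 N2) p p'" "nu_Q (q 0) + 2 \<le> z"
      using ext_lower[OF p] by blast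
    obtain k' q' y' where F: "K p' = Some k'" "H (bpair p' (\<lambda>_. lpo k')) = Some q'" "cauchy_name q' y'" "z \<le> y'"
      using F1[OF p'(1)] by blast
    have "agree N1 p p'" "agree N2 p p'" using p'(2) by (auto simp: agree_def)
    then have "lpo k' = lpo k" "agree N2 (bpair p (\<lambda>_. lpo k)) (bpair p' (\<lambda>_. lpo k))"
      using stab[OF p'(1) _ F(1)] agree_bpair by auto
    then have "q' 0 = q 0" using N2 F(2) by auto
    then have "y' \<le> nu_Q (q 0) + 1" using cauchy_0[OF F(3)] by simp
    then show False using F(4) p'(3) by linarith
  qed
  have A: "False" if p: "lower_name p x" and Kp: "K p = Some k" and z: "k n0 = 0" for p x k n0
  proof -
    obtain q y where Hq: "H (bpair p (\<lambda>_. lpo k)) = Some q"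
      using F1[OF p] Kp by auto
    obtain N1 where N1: "\<forall>p' k'. agree N1 p p' \<longrightarrow> K p' = Some k' \<longrightarrow> k' n0 = k n0"
      using computable_local[of K, OF HK(2) Kp] by blast
    have "lpo k' = lpo k" if "lower_name p' z" "agree N1 p p'" "K p' = Some k'" for p' z k'
    proof -
      have "k' n0 = 0" using N1 that z by auto
      then have "\<exists>n. k' n = 0" "\<exists>n. k n = 0" using z by blast+
      then show ?thesis unfolding lpo_def by simp
    qed
    then show False using core[OF p Kp Hq] by blast
  qed
  have B: "False" if p: "lower_name p x" and Kp: "K p = Some k" and nz: "\<forall>n. k n \<noteq> 0" for p x k
  proof -
    obtain q y where Hq: "H (bpair p (\<lambda>_. lpo k)) = Some q"
      using F1[OF p] Kp by auto
    have "lpo k' = lpo k" if "lower_name p' z" "agree 0 p p'" "K p' = Some k'" for p' z k'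
    proof (cases "\<exists>n. k' n = 0")
      case True then show ?thesis using A[OF that(1) that(3)] by blast
    next
      case False then show ?thesis using nz by (simp add: lpo_def)
    qed
    then show False using core[OF p Kp Hq] by blast
  qed
  have p0: "lower_name (\<lambda>_. 0) 0" by (simp add: lower_name_def nu_Q_0)
  obtain k where "K (\<lambda>_. 0) = Some k" using F1[OF p0] by blast
  then show False using A[OF p0] B[OF p0] by blast
qed


lemma BI_not_le_LLPO: "\<not> weihrauch_le (rep_prod rep_lower rep_upper) rep_cauchy B_I_minus rep_baire rep_nat LLPO"
proof
  assume "weihrauch_le (rep_prod rep_lower rep_upper) rep_cauchy B_I_minus rep_baire rep_nat LLPO"
  then obtain H K where HK: "computable H" "computable K" and
    R: "\<And>G. realizer rep_baire rep_nat LLPO G \<Longrightarrow>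
           realizer (rep_prod rep_lower rep_upper) rep_cauchy B_I_minus (\<lambda>p. Option.bind (K p) (\<lambda>k. Option.bind (G k) (\<lambda>r. H (bpair p r))))"
    unfolding weihrauch_le_def by blast
  define llpo :: "baire \<Rightarrow> nat" where "llpo k = (if \<forall>n. k (2 * n) = 0 then 0 else 1)" for k
  define G0 :: "baire \<Rightarrow> baire option" where "G0 k = Some (\<lambda>_. llpo k)" for k
  have "realizer rep_baire rep_nat LLPO G0"
    unfolding realizer_def
  proof (intro allI impI, elim conjE)
    fix p k assume pk: "rep_baire p = Some k" and ne: "LLPO k \<noteq> {}"
    then have kp: "k = p" by (simp add: rep_baire_def)
    have one: "\<forall>a b. k a \<noteq> 0 \<and> k b \<noteq> 0 \<longrightarrow> a = b" using ne by (auto simp: LLPO_def split: if_splits)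
    have LL: "LLPO k = {i. (i = 0 \<and> (\<forall>n. k (2 * n) = 0)) \<or> (i = 1 \<and> (\<forall>n. k (2 * n + 1) = 0))}"
      by (simp only: LLPO_def if_P[OF one])
    have "llpo k \<in> LLPO k"
    proof (cases "\<forall>n. k (2 * n) = 0")
      case True then show ?thesis by (simp add: LL llpo_def)
    next
      case False
      then obtain n where n: "k (2 * n) \<noteq> 0" by blast
      have "\<forall>m. k (2 * m + 1) = 0"
      proof
        fix m :: nat show "k (2 * m + 1) = 0"
        proof (rule ccontr)
          assume "k (2 * m + 1) \<noteq> 0"
          then have "2 * m + 1 = 2 * n" using one n by blast
          then show False by presburger
        qed
      qed
      then show ?thesis using False by (simp add: LL llpo_def)
    qed
    then show "\<exists>q y. G0 p = Some q \<and> rep_nat q = Some y \<and> y \<in> LLPO k"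
      using kp by (simp add: G0_def rep_nat_def)
  qed
  then have RR: "realizer (rep_prod rep_lower rep_upper) rep_cauchy B_I_minus (\<lambda>p. Option.bind (K p) (\<lambda>k. Option.bind (G0 k) (\<lambda>r. H (bpair p r))))"
    by (rule R)
  have F2: "\<exists>k q t. K p = Some k \<and> H (bpair p (\<lambda>_. llpo k)) = Some q \<and> cauchy_name q t \<and> x \<le> t \<and> t \<le> y"
    if "lower_name (\<lambda>n. p (2 * n)) x" "upper_name (\<lambda>n. p (2 * n + 1)) y" "x < y" for p x y
  proof -
    have "rep_prod rep_lower rep_upper p = Some (x, y)" using that by (simp add: rep_prod_iff)
    moreover have "B_I_minus (x, y) \<noteq> {}" using that by (simp add: B_I_minus_def)
    ultimately obtain q t where "Option.bind (K p) (\<lambda>k. Option.bind (G0 k) (\<lambda>r. H (bpair p r))) = Some q"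
      "rep_cauchy q = Some t" "t \<in> B_I_minus (x, y)"
      using RR unfolding realizer_def by blast
    then show ?thesis using that(3)
      by (cases "K p") (auto simp: G0_def rep_cauchy_iff B_I_minus_def)
  qed
  have core: "False" if p: "lower_name (\<lambda>n. p (2 * n)) x" "upper_name (\<lambda>n. p (2 * n + 1)) y" "x < y"
    and Kp: "K p = Some k" and Hq: "H (bpair p (\<lambda>_. llpo k)) = Some q"
    and stab: "\<And>p' r s k'. lower_name (\<lambda>n. p' (2 * n)) r \<Longrightarrow> upper_name (\<lambda>n. p' (2 * n + 1)) s \<Longrightarrow> r < s \<Longrightarrow>
       agree N1 p p' \<Longrightarrow> K p' = Some k' \<Longrightarrow> llpo k' = llpo k"
    for p x y k q N1
  proof -
    obtain r1 r2 r3 r4 where rr: "r1 \<in> \<rat>" "r2 \<in> \<rat>" "r3 \<in> \<rat>" "r4 \<in> \<rat>"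
      "x < r1" "r1 < r2" "r2 < r3" "r3 < r4" "r4 < y"
      using four_rats[OF p(3)] by blast
    obtain m where m: "(1/2::real) ^ m < (r3 - r2) / 2"
      using real_arch_pow_inv[of "(r3 - r2) / 2" "1/2"] rr by auto
    obtain N2 where N2: "\<forall>p'' q'. agree N2 (bpair p (\<lambda>_. llpo k)) p'' \<longrightarrow> H p'' = Some q' \<longrightarrow> q' m = q m"
      using computable_local[of H, OF HK(1) Hq] by blast
    have pt: "\<exists>t. a \<le> t \<and> t \<le> b \<and> \<bar>nu_Q (q m) - t\<bar> \<le> (1/2) ^ m"
      if ab: "a \<in> \<rat>" "b \<in> \<rat>" "x \<le> a" "a < b" "b \<le> y" for a b
    proof -
      obtain p' where p': "lower_name (\<lambda>n. p' (2 * n)) a" "upper_name (\<lambda>n. p' (2 * n + 1)) b"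
        "agree (max N1 N2) p p'"
        using ext_prod[OF p(1) p(2) ab(1) ab(2) ab(3) ab(5)] by blast
      obtain k' q' t where F: "K p' = Some k'" "H (bpair p' (\<lambda>_. llpo k')) = Some q'" "cauchy_name q' t"
        "a \<le> t" "t \<le> b"
        using F2[OF p'(1) p'(2) ab(4)] by blast
      have ag: "agree N1 p p'" "agree N2 p p'" using p'(3) by (auto simp: agree_def)
      have "llpo k' = llpo k" using stab[OF p'(1) p'(2) ab(4) ag(1) F(1)] .
      moreover have "agree N2 (bpair p (\<lambda>_. llpo k)) (bpair p' (\<lambda>_. llpo k))" using agree_bpair[OF ag(2)] .
      ultimately have "q' m = q m" using N2 F(2) by auto
      then show ?thesis using cauchy_m[OF F(3), of m] F(4) F(5) by auto
    qed
    obtain ta where ta: "r1 \<le> ta" "ta \<le> r2" "\<bar>nu_Q (q m) - ta\<bar> \<le> (1/2) ^ m"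
      using pt[of r1 r2] rr by auto
    obtain tb where tb: "r3 \<le> tb" "tb \<le> r4" "\<bar>nu_Q (q m) - tb\<bar> \<le> (1/2) ^ m"
      using pt[of r3 r4] rr by auto
    have "tb - ta \<le> 2 * (1/2) ^ m"
      using ta(3) tb(3) abs_le_iff[of "nu_Q (q m) - ta" "(1/2)^m"] abs_le_iff[of "nu_Q (q m) - tb" "(1/2)^m"] by linarith
    moreover have "2 * (1/2::real) ^ m < r3 - r2" using m by simp
    ultimately show False using ta(2) tb(1) by linarith
  qed
  have A: "False" if p: "lower_name (\<lambda>n. p (2 * n)) x" "upper_name (\<lambda>n. p (2 * n + 1)) y" "x < y"
    and Kp: "K p = Some k" and z: "k (2 * n0) \<noteq> 0" for p x y k n0
  proof -
    obtain q where Hq: "H (bpair p (\<lambda>_. llpo k)) = Some q"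
      using F2[OF p] Kp by auto
    obtain N1 where N1: "\<forall>p' k'. agree N1 p p' \<longrightarrow> K p' = Some k' \<longrightarrow> k' (2 * n0) = k (2 * n0)"
      using computable_local[of K, OF HK(2) Kp] by blast
    have "llpo k' = llpo k" if "agree N1 p p'" "K p' = Some k'" for p' k'
    proof -
      have "k' (2 * n0) \<noteq> 0" using N1 that z by auto
      then have "\<not> (\<forall>n. k' (2 * n) = 0)" by (metis (full_types))
      moreover have "\<not> (\<forall>n. k (2 * n) = 0)" using z by (metis (full_types))
      ultimately have "\<not> (\<forall>n. k' (2 * n) = 0)" "\<not> (\<forall>n. k (2 * n) = 0)" by blast+
      then show ?thesis unfolding llpo_def by simp
    qed
    then show False using core[OF p Kp Hq] by blast
  qed
  have B: "False" if p: "lower_name (\<lambda>n. p (2 * n)) x" "upper_name (\<lambda>n. p (2 * n + 1)) y" "x < y"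
    and Kp: "K p = Some k" and nz: "\<forall>n. k (2 * n) = 0" for p x y k
  proof -
    obtain q where Hq: "H (bpair p (\<lambda>_. llpo k)) = Some q"
      using F2[OF p] Kp by auto
    have "llpo k' = llpo k" if "lower_name (\<lambda>n. p' (2 * n)) r" "upper_name (\<lambda>n. p' (2 * n + 1)) s" "r < s"
      "agree 0 p p'" "K p' = Some k'" for p' r s k'
    proof (cases "\<forall>n. k' (2 * n) = 0")
      case True then show ?thesis using nz by (simp add: llpo_def)
    next
      case False
      then obtain n where "k' (2 * n) \<noteq> 0" by blast
      then show ?thesis using A[OF that(1) that(2) that(3) that(5)] by blast
    qed
    then show False using core[OF p Kp Hq] by blast
  qed
  define p0 :: baire where "p0 i = (if even i then 0 else 5)" for i
  have l0: "lower_name (\<lambda>n. p0 (2 * n)) 0" by (simp add: lower_name_def p0_def nu_Q_0)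
  have u0: "upper_name (\<lambda>n. p0 (2 * n + 1)) 1" by (simp add: upper_name_def p0_def nu_Q_consts)
  have lt: "(0::real) < 1" by simp
  obtain k where "K p0 = Some k" using F2[OF l0 u0 lt] by blast
  then show False using A[OF l0 u0 lt] B[OF l0 u0 lt] by blast
qed

theorem proposition4p5:
  shows "weihrauch_less rep_baire rep_nat LPO rep_lower rep_cauchy B_F
       \<and> weihrauch_less rep_baire rep_nat LLPO (rep_prod rep_lower rep_upper) rep_cauchy B_I_minus"
  unfolding weihrauch_less_def using LPO_le_BF BF_not_le_LPO LLPO_le_BI BI_not_le_LLPO by blast

end
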